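(* Let $S$ be an entropy function for a finite set $X$, let $X'\subset X$, let $R$ be a new element not in $X$, $Y:=X'\cup\{R\}$, and let $T$ be the entropy function on $Y$ defined by $T(A):=S(A)$ and $T(A\cup\{R\}):=S(A\cup(X\setminus X'))$ for $A\subseteq X'$. Let $M:\mathbb R^X\to\mathbb R^Y$ be the linear map $(Mf)(x)=f(x)$ for $x\in X'$ and $(Mf)(R)=\sum_{x\in X\setminus X'}f(x)$. Then $F_T=M(F_S)$.
   Context: An entropy function for a finite set $X$ is a function $S:2^X\to[0,\infty)$ with $S(\emptyset)=0$, $S(A)+S(B)\ge S(A\cap B)+S(A\cup B)$ and $S(A)+S(B)\ge S(A\setminus B)+S(B\setminus A)$ for all $A,B\subseteq X$. An entanglement distribution function (EDF) for $S$ is a function $f:X\to\mathbb R$ (a vector in $\mathbb R^X$) with $\big|\sum_{x\in A}f(x)\big|\le S(A)$ for all $A\subseteq X$; $F_S$ denotes the set of all EDFs for $S$ (the entropohedron). *)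

theory Defs
  imports "HOL-Analysis.Analysis"
begin

definition entropy_function :: "'a set \<Rightarrow> ('a set \<Rightarrow> real) \<Rightarrow> bool" where
  "entropy_function X S \<longleftrightarrow> finite X \<and> S {} = 0 \<and>
     (\<forall>A. A \<subseteq> X \<longrightarrow> S A \<ge> 0) \<and>
     (\<forall>A B. A \<subseteq> X \<longrightarrow> B \<subseteq> X \<longrightarrow>
        S A + S B \<ge> S (A \<inter> B) + S (A \<union> B) \<and>
        S A + S B \<ge> S (A - B) + S (B - A))"

text \<open>Vectors in R^X are functions vanishing outside X.
  EDF set (entropohedron) F_S.\<close>
definition EDF :: "'a set \<Rightarrow> ('a set \<Rightarrow> real) \<Rightarrow> ('a \<Rightarrow> real) set" where
  "EDF X S = {f. (\<forall>x. x \<notin> X \<longrightarrow> f x = 0) \<and>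
                 (\<forall>A. A \<subseteq> X \<longrightarrow> \<bar>\<Sum>x\<in>A. f x\<bar> \<le> S A)}"

text \<open>Merging X - X' into a new element R = None; Y = Some ` X' \<union> {None}.\<close>
definition merge_Y :: "'a set \<Rightarrow> 'a option set" where
  "merge_Y X' = Some ` X' \<union> {None}"

definition merge_T :: "'a set \<Rightarrow> 'a set \<Rightarrow> ('a set \<Rightarrow> real) \<Rightarrow> 'a option set \<Rightarrow> real" where
  "merge_T X X' S B = (if None \<in> B then S ((the ` (B - {None})) \<union> (X - X'))
                       else S (the ` B))"

definition merge_M :: "'a set \<Rightarrow> 'a set \<Rightarrow> ('a \<Rightarrow> real) \<Rightarrow> 'a option \<Rightarrow> real" where
  "merge_M X X' f y = (case y of
       None \<Rightarrow> (\<Sum>x\<in>X - X'. f x)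
     | Some x \<Rightarrow> (if x \<in> X' then f x else 0))"

end

theory Submission
  imports Defs
begin

lemma greedy:
  fixes b :: "'a set \<Rightarrow> real"
  assumes "finite Z" "Z \<subseteq> W" "b {} = 0"
    "\<And>C D. C \<subseteq> W \<Longrightarrow> D \<subseteq> W \<Longrightarrow> b (C \<inter> D) + b (C \<union> D) \<le> b C + b D"
  shows "\<exists>f. sum f Z = b Z \<and> (\<forall>C\<subseteq>Z. sum f C \<le> b C)"
  using assms(1,2)
proof (induction Z rule: finite_induct)
  case empty
  then show ?case using assms(3) by auto
next
  case (insert z Z0)
  then obtain f0 where f0: "sum f0 Z0 = b Z0" "\<forall>C\<subseteq>Z0. sum f0 C \<le> b C" by auto
  define f where "f = f0(z := b (insert z Z0) - b Z0)"
  have s: "sum f C = sum f0 C" if "C \<subseteq> Z0" for C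
    using that insert.hyps(2) unfolding f_def by (intro sum.cong) auto
  have "sum f (insert z Z0) = b (insert z Z0)"
    using insert.hyps s[of Z0] f0(1) by (simp add: f_def)
  moreover have "sum f C \<le> b C" if C: "C \<subseteq> insert z Z0" for C
  proof (cases "z \<in> C")
    case False
    then have "C \<subseteq> Z0" using C by auto
    then show ?thesis using s f0 by auto
  next
    case True
    have C0: "C - {z} \<subseteq> Z0" using C by auto
    have fin: "finite C" using C insert.hyps(1) finite_subset by blast
    have "sum f C = f z + sum f (C - {z})" using True fin by (simp add: sum.remove)
    also have "\<dots> = b (insert z Z0) - b Z0 + sum f0 (C - {z})" using s[OF C0] by (simp add: f_def)
    also have "\<dots> \<le> b (insert z Z0) - b Z0 + b (C - {z})" using f0(2) C0 by auto
    also have "\<dots> \<le> b C"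
    proof -
      have "C \<inter> Z0 = C - {z}" using C insert.hyps(2) by auto
      moreover have "C \<union> Z0 = insert z Z0" using C True by auto
      moreover have "b (C \<inter> Z0) + b (C \<union> Z0) \<le> b C + b Z0"
        using assms(4) C insert.prems by auto
      ultimately show ?thesis by simp
    qed
    finally show ?thesis .
  qed
  ultimately show ?case by auto
qed

lemma conv_lo:
  fixes t c x y :: real
  assumes "0 \<le> t" "t \<le> 1" "c \<le> x" "c \<le> y"
  shows "c \<le> t * x + (1 - t) * y"
proof -
  have "t * c \<le> t * x" using assms by (simp add: mult_left_mono)
  moreover have "(1 - t) * c \<le> (1 - t) * y" using assms by (simp add: mult_left_mono)
  ultimately show ?thesis by (simp add: algebra_simps)
qed

lemma conv_hi:
  fixes t c x y :: real
  assumes "0 \<le> t" "t \<le> 1" "x \<le> c" "y \<le> c"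
  shows "t * x + (1 - t) * y \<le> c"
proof -
  have "t * x \<le> t * c" using assms by (simp add: mult_left_mono)
  moreover have "(1 - t) * y \<le> (1 - t) * c" using assms by (simp add: mult_left_mono)
  ultimately show ?thesis by (simp add: algebra_simps)
qed

lemma core:
  fixes b p :: "'a set \<Rightarrow> real"
  assumes "finite Z" "b {} = 0" "p {} = 0"
    "\<And>C D. C \<subseteq> Z \<Longrightarrow> D \<subseteq> Z \<Longrightarrow> b (C \<inter> D) + b (C \<union> D) \<le> b C + b D"
    "\<And>C D. C \<subseteq> Z \<Longrightarrow> D \<subseteq> Z \<Longrightarrow> p C + p D \<le> p (C \<inter> D) + p (C \<union> D)"
    "\<And>C D. C \<subseteq> Z \<Longrightarrow> D \<subseteq> Z \<Longrightarrow> b (C - D) - p (D - C) \<le> b C - p D"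
    "p Z \<le> \<alpha>" "\<alpha> \<le> b Z"
  shows "\<exists>f. sum f Z = \<alpha> \<and> (\<forall>C\<subseteq>Z. p C \<le> sum f C \<and> sum f C \<le> b C)"
proof -
  obtain f1 where f1: "sum f1 Z = b Z" "\<forall>C\<subseteq>Z. sum f1 C \<le> b C"
    using greedy[OF assms(1) subset_refl assms(2) assms(4)] by blast
  obtain h where h: "sum h Z = - p Z" "\<forall>C\<subseteq>Z. sum h C \<le> - p C"
  proof -
    have "\<exists>f. sum f Z = - p Z \<and> (\<forall>C\<subseteq>Z. sum f C \<le> - p C)"
    proof (rule greedy[OF assms(1) subset_refl])
      show "- p {} = 0" using assms(3) by simp
      fix C D assume "C \<subseteq> Z" "D \<subseteq> Z"
      then show "- p (C \<inter> D) + - p (C \<union> D) \<le> - p C + - p D" using assms(5)[of C D] by linarith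
    qed
    then show ?thesis using that by blast
  qed
  define f2 where "f2 = (\<lambda>x. - h x)"
  have sumdiff: "sum g C = sum g Z - sum g (Z - C)" if "C \<subseteq> Z" for g :: "'a \<Rightarrow> real" and C
    using sum.subset_diff[OF that assms(1), of g] by simp
  have b1: "p C \<le> sum f1 C \<and> sum f1 C \<le> b C" if "C \<subseteq> Z" for C
  proof -
    have 1: "sum f1 (Z - C) \<le> b (Z - C)" using f1(2) by auto
    have "C - Z = {}" using that by auto
    then have "p (C - Z) = 0" using assms(3) by metis
    then have 2: "b (Z - C) \<le> b Z - p C" using assms(6)[of Z C] that by auto
    have 3: "sum f1 C \<le> b C" using f1(2) that by auto
    show ?thesis using sumdiff[OF that, of f1] f1(1) 1 2 3 by linarith
  qed
  have e: "sum f2 D = - sum h D" for D unfolding f2_def by (simp add: sum_negf)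
  have b2: "p C \<le> sum f2 C \<and> sum f2 C \<le> b C" if "C \<subseteq> Z" for C
  proof -
    have 1: "sum h (Z - C) \<le> - p (Z - C)" using h(2) by auto
    have "C - Z = {}" using that by auto
    then have "b (C - Z) = 0" using assms(2) by metis
    then have 2: "- p (Z - C) \<le> b C - p Z" using assms(6)[of C Z] that by auto
    have 3: "sum h C \<le> - p C" using h(2) that by auto
    show ?thesis using sumdiff[OF that, of h] h(1) 1 2 3 e[of C] by linarith
  qed
  have pb: "p Z \<le> b Z" using assms(7,8) by linarith
  show ?thesis
  proof (cases "p Z = b Z")
    case True
    then show ?thesis using b1 f1 assms(7,8) by (intro exI[of _ f1]) auto
  next
    case False
    define t where "t = (\<alpha> - p Z) / (b Z - p Z)"
    have t0: "0 \<le> t" "t \<le> 1" using False pb assms(7,8) by (auto simp: t_def field_simps)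
    define f where "f = (\<lambda>x. t * f1 x + (1 - t) * f2 x)"
    have sf: "sum f C = t * sum f1 C + (1 - t) * sum f2 C" for C
      unfolding f_def by (simp add: sum.distrib sum_distrib_left)
    have "sum f Z = t * b Z + (1 - t) * p Z" using sf f1(1) e h(1) by simp
    also have "\<dots> = p Z + t * (b Z - p Z)" by (simp add: algebra_simps)
    also have "t * (b Z - p Z) = \<alpha> - p Z"
    proof -
      have nz: "b Z - p Z \<noteq> 0" using False by simp
      then show ?thesis unfolding t_def by simp
    qed
    also have "p Z + (\<alpha> - p Z) = \<alpha>" by simp
    finally have "sum f Z = \<alpha>" .
    moreover have "p C \<le> sum f C \<and> sum f C \<le> b C" if "C \<subseteq> Z" for C
      using b1[OF that] b2[OF that] sf[of C] conv_lo[OF t0] conv_hi[OF t0] by auto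
    ultimately show ?thesis by blast
  qed
qed

lemma split_Y:
  assumes "B \<subseteq> merge_Y X'"
  shows "B - {None} = Some ` (the ` (B - {None}))" "the ` (B - {None}) \<subseteq> X'"
  using assms unfolding merge_Y_def by (auto simp: image_iff)

theorem corollary25:
  fixes X X' :: "'a set" and S :: "'a set \<Rightarrow> real"
  assumes "entropy_function X S"
    and "X' \<subseteq> X"
  shows "EDF (merge_Y X') (merge_T X X' S) = merge_M X X' ` EDF X S"
proof -
  define Z where "Z = X - X'"
  have finX: "finite X" and S0: "S {} = 0"
    and sub: "\<And>A B. A \<subseteq> X \<Longrightarrow> B \<subseteq> X \<Longrightarrow> S (A \<inter> B) + S (A \<union> B) \<le> S A + S B"
    and crs: "\<And>A B. A \<subseteq> X \<Longrightarrow> B \<subseteq> X \<Longrightarrow> S (A - B) + S (B - A) \<le> S A + S B"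
    using assms(1) unfolding entropy_function_def by auto
  have finX': "finite X'" using finX assms(2) finite_subset by blast
  have finZ: "finite Z" using finX Z_def by auto
  have finY: "finite (merge_Y X')" using finX' unfolding merge_Y_def by auto
  have NY: "None \<in> merge_Y X'" unfolding merge_Y_def by auto
  have sumSome: "sum g (Some ` A) = sum (\<lambda>x. g (Some x)) A" for g :: "'a option \<Rightarrow> real" and A
    by (simp add: sum.reindex)
  show ?thesis
  proof
    show "merge_M X X' ` EDF X S \<subseteq> EDF (merge_Y X') (merge_T X X' S)"
    proof
      fix y assume "y \<in> merge_M X X' ` EDF X S"
      then obtain f where f: "f \<in> EDF X S" and y: "y = merge_M X X' f" by auto
      have f0: "\<And>x. x \<notin> X \<Longrightarrow> f x = 0" and fb: "\<And>A. A \<subseteq> X \<Longrightarrow> \<bar>sum f A\<bar> \<le> S A"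
        using f unfolding EDF_def by auto
      have "\<forall>v. v \<notin> merge_Y X' \<longrightarrow> y v = 0"
      proof (intro allI impI)
        fix v assume "v \<notin> merge_Y X'"
        then obtain x where "v = Some x" "x \<notin> X'" unfolding merge_Y_def by (cases v) auto
        then show "y v = 0" by (simp add: y merge_M_def)
      qed
      moreover have "\<bar>sum y B\<bar> \<le> merge_T X X' S B" if B: "B \<subseteq> merge_Y X'" for B
      proof -
        define A where "A = the ` (B - {None})"
        have BA: "B - {None} = Some ` A" and AX: "A \<subseteq> X'" using split_Y[OF B] A_def by auto
        have finB: "finite B" using B finY finite_subset by blast
        have finA: "finite A" using AX finX' finite_subset by blast
        have sA: "sum y (B - {None}) = sum f A"
          unfolding BA sumSome using AX by (intro sum.cong) (auto simp: y merge_M_def)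
        show ?thesis
        proof (cases "None \<in> B")
          case False
          then have BB: "B - {None} = B" by auto
          have "sum y B = sum f A" using sA BB by simp
          moreover have "merge_T X X' S B = S A"
            using False BB unfolding merge_T_def A_def by simp
          ultimately have "sum y B = sum f A" "merge_T X X' S B = S A" by auto
          then show ?thesis using fb AX assms(2) by auto
        next
          case True
          have "sum y B = y None + sum y (B - {None})" using True finB by (simp add: sum.remove)
          also have "\<dots> = sum f Z + sum f A" using sA by (simp add: y merge_M_def Z_def)
          also have "\<dots> = sum f (A \<union> Z)"
            using AX finA finZ by (subst sum.union_disjoint) (auto simp: Z_def)
          finally have "sum y B = sum f (A \<union> Z)" .
          moreover have "merge_T X X' S B = S (A \<union> Z)"
            using True by (simp add: merge_T_def A_def Z_def)
          moreover have "A \<union> Z \<subseteq> X" using AX assms(2) Z_def by auto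
          ultimately show ?thesis using fb by auto
        qed
      qed
      ultimately show "y \<in> EDF (merge_Y X') (merge_T X X' S)" unfolding EDF_def by auto
    qed
  next
    show "EDF (merge_Y X') (merge_T X X' S) \<subseteq> merge_M X X' ` EDF X S"
    proof
      fix g assume g: "g \<in> EDF (merge_Y X') (merge_T X X' S)"
      have g0: "\<And>v. v \<notin> merge_Y X' \<Longrightarrow> g v = 0"
        and gb: "\<And>B. B \<subseteq> merge_Y X' \<Longrightarrow> \<bar>sum g B\<bar> \<le> merge_T X X' S B"
        using g unfolding EDF_def by auto
      define gA where "gA A = sum (\<lambda>x. g (Some x)) A" for A
      have G1: "\<bar>gA A\<bar> \<le> S A" if "A \<subseteq> X'" for A
      proof -
        have "Some ` A \<subseteq> merge_Y X'" using that unfolding merge_Y_def by auto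
        moreover have "merge_T X X' S (Some ` A) = S A" by (simp add: merge_T_def image_image)
        ultimately show ?thesis using gb[of "Some ` A"] by (simp add: sumSome gA_def)
      qed
      have G2: "\<bar>gA A + g None\<bar> \<le> S (A \<union> Z)" if "A \<subseteq> X'" for A
      proof -
        have finA: "finite A" using that finX' finite_subset by blast
        have "insert None (Some ` A) \<subseteq> merge_Y X'" using that unfolding merge_Y_def by auto
        moreover have "insert None (Some ` A) - {None} = Some ` A" by auto
        moreover have "merge_T X X' S (insert None (Some ` A)) = S (A \<union> Z)"
          by (simp add: merge_T_def image_image Z_def)
        moreover have "sum g (insert None (Some ` A)) = g None + gA A"
          using finA by (simp add: sumSome gA_def)
        ultimately show ?thesis using gb[of "insert None (Some ` A)"] by auto
      qed
      have gA_un: "gA A1 + gA A2 = gA (A1 \<inter> A2) + gA (A1 \<union> A2)"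
        if "A1 \<subseteq> X'" "A2 \<subseteq> X'" for A1 A2
        using that finX' finite_subset sum.union_inter[of A1 A2 "\<lambda>x. g (Some x)"]
        unfolding gA_def by (metis add.commute)
      have gA_df: "gA A1 = gA (A1 - A2) + gA (A1 \<inter> A2)" if "A1 \<subseteq> X'" for A1 A2
        using that finX' finite_subset sum.Int_Diff[of A1 "\<lambda>x. g (Some x)" A2]
        unfolding gA_def by (metis add.commute)
      define u where "u C = Min ((\<lambda>A. S (A \<union> C) - gA A) ` Pow X')" for C
      define l where "l C = Max ((\<lambda>A. - S (A \<union> C) - gA A) ` Pow X')" for C
      have u_le: "u C \<le> S (A \<union> C) - gA A" if "A \<subseteq> X'" for A C
        unfolding u_def using that finX' by (intro Min_le) auto
      have u_ex: "\<exists>A\<subseteq>X'. u C = S (A \<union> C) - gA A" for C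
      proof -
        have "u C \<in> (\<lambda>A. S (A \<union> C) - gA A) ` Pow X'"
          unfolding u_def using finX' by (intro Min_in) auto
        then show ?thesis by auto
      qed
      have l_ge: "- S (A \<union> C) - gA A \<le> l C" if "A \<subseteq> X'" for A C
        unfolding l_def using that finX' by (intro Max_ge) auto
      have l_ex: "\<exists>A\<subseteq>X'. l C = - S (A \<union> C) - gA A" for C
      proof -
        have "l C \<in> (\<lambda>A. - S (A \<union> C) - gA A) ` Pow X'"
          unfolding l_def using finX' by (intro Max_in) auto
        then show ?thesis by auto
      qed
      have u0: "u {} = 0"
      proof -
        have "u {} \<le> 0" using u_le[of "{}" "{}"] S0 by (simp add: gA_def)
        moreover obtain A where "A \<subseteq> X'" "u {} = S (A \<union> {}) - gA A" using u_ex by blast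
        ultimately show ?thesis using G1[of A] by auto
      qed
      have l0: "l {} = 0"
      proof -
        have "0 \<le> l {}" using l_ge[of "{}" "{}"] S0 by (simp add: gA_def)
        moreover obtain A where "A \<subseteq> X'" "l {} = - S (A \<union> {}) - gA A" using l_ex by blast
        ultimately show ?thesis using G1[of A] by auto
      qed
      have uZ: "g None \<le> u Z"
      proof -
        obtain A where "A \<subseteq> X'" "u Z = S (A \<union> Z) - gA A" using u_ex by blast
        then show ?thesis using G2[of A] by auto
      qed
      have lZ: "l Z \<le> g None"
      proof -
        obtain A where "A \<subseteq> X'" "l Z = - S (A \<union> Z) - gA A" using l_ex by blast
        then show ?thesis using G2[of A] by auto
      qed
      have disj: "A \<inter> C = {}" if "A \<subseteq> X'" "C \<subseteq> Z" for A C
        using that Z_def by auto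
      have usub: "u (C \<inter> D) + u (C \<union> D) \<le> u C + u D" if CD: "C \<subseteq> Z" "D \<subseteq> Z" for C D
      proof -
        obtain A1 where A1: "A1 \<subseteq> X'" "u C = S (A1 \<union> C) - gA A1" using u_ex by blast
        obtain A2 where A2: "A2 \<subseteq> X'" "u D = S (A2 \<union> D) - gA A2" using u_ex by blast
        have i: "(A1 \<union> C) \<inter> (A2 \<union> D) = (A1 \<inter> A2) \<union> (C \<inter> D)"
          using disj[OF A1(1) CD(2)] disj[OF A2(1) CD(1)] by blast
        have un: "(A1 \<union> C) \<union> (A2 \<union> D) = (A1 \<union> A2) \<union> (C \<union> D)" by blast
        have "S ((A1 \<union> C) \<inter> (A2 \<union> D)) + S ((A1 \<union> C) \<union> (A2 \<union> D)) \<le> S (A1 \<union> C) + S (A2 \<union> D)"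
          using sub[of "A1 \<union> C" "A2 \<union> D"] A1(1) A2(1) CD assms(2) unfolding Z_def by blast
        moreover have "u (C \<inter> D) \<le> S ((A1 \<inter> A2) \<union> (C \<inter> D)) - gA (A1 \<inter> A2)"
          by (rule u_le) (use A1(1) in auto)
        moreover have "u (C \<union> D) \<le> S ((A1 \<union> A2) \<union> (C \<union> D)) - gA (A1 \<union> A2)"
          by (rule u_le) (use A1(1) A2(1) in auto)
        ultimately show ?thesis using A1 A2 gA_un[OF A1(1) A2(1)] unfolding i un by linarith
      qed
      have lsup: "l C + l D \<le> l (C \<inter> D) + l (C \<union> D)" if CD: "C \<subseteq> Z" "D \<subseteq> Z" for C D
      proof -
        obtain A1 where A1: "A1 \<subseteq> X'" "l C = - S (A1 \<union> C) - gA A1" using l_ex by blast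
        obtain A2 where A2: "A2 \<subseteq> X'" "l D = - S (A2 \<union> D) - gA A2" using l_ex by blast
        have i: "(A1 \<union> C) \<inter> (A2 \<union> D) = (A1 \<inter> A2) \<union> (C \<inter> D)"
          using disj[OF A1(1) CD(2)] disj[OF A2(1) CD(1)] by blast
        have un: "(A1 \<union> C) \<union> (A2 \<union> D) = (A1 \<union> A2) \<union> (C \<union> D)" by blast
        have "S ((A1 \<union> C) \<inter> (A2 \<union> D)) + S ((A1 \<union> C) \<union> (A2 \<union> D)) \<le> S (A1 \<union> C) + S (A2 \<union> D)"
          using sub[of "A1 \<union> C" "A2 \<union> D"] A1(1) A2(1) CD assms(2) unfolding Z_def by blast
        moreover have "- S ((A1 \<inter> A2) \<union> (C \<inter> D)) - gA (A1 \<inter> A2) \<le> l (C \<inter> D)"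
          by (rule l_ge) (use A1(1) in auto)
        moreover have "- S ((A1 \<union> A2) \<union> (C \<union> D)) - gA (A1 \<union> A2) \<le> l (C \<union> D)"
          by (rule l_ge) (use A1(1) A2(1) in auto)
        ultimately show ?thesis using A1 A2 gA_un[OF A1(1) A2(1)] unfolding i un by linarith
      qed
      have ucross: "u (C - D) - l (D - C) \<le> u C - l D" if CD: "C \<subseteq> Z" "D \<subseteq> Z" for C D
      proof -
        obtain A1 where A1: "A1 \<subseteq> X'" "u C = S (A1 \<union> C) - gA A1" using u_ex by blast
        obtain A2 where A2: "A2 \<subseteq> X'" "l D = - S (A2 \<union> D) - gA A2" using l_ex by blast
        have d1: "(A1 \<union> C) - (A2 \<union> D) = (A1 - A2) \<union> (C - D)"
          using disj[OF A1(1) CD(2)] disj[OF A2(1) CD(1)] by blast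
        have d2: "(A2 \<union> D) - (A1 \<union> C) = (A2 - A1) \<union> (D - C)"
          using disj[OF A1(1) CD(2)] disj[OF A2(1) CD(1)] by blast
        have "S ((A1 \<union> C) - (A2 \<union> D)) + S ((A2 \<union> D) - (A1 \<union> C)) \<le> S (A1 \<union> C) + S (A2 \<union> D)"
          using crs[of "A1 \<union> C" "A2 \<union> D"] A1(1) A2(1) CD assms(2) unfolding Z_def by blast
        moreover have "u (C - D) \<le> S ((A1 - A2) \<union> (C - D)) - gA (A1 - A2)"
          by (rule u_le) (use A1(1) in auto)
        moreover have "- S ((A2 - A1) \<union> (D - C)) - gA (A2 - A1) \<le> l (D - C)"
          by (rule l_ge) (use A2(1) in auto)
        moreover have "gA A1 = gA (A1 - A2) + gA (A1 \<inter> A2)" using gA_df A1(1) by blast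
        moreover have "gA A2 = gA (A2 - A1) + gA (A1 \<inter> A2)" using gA_df[OF A2(1), of A1]
          by (simp add: Int_commute)
        ultimately show ?thesis using A1 A2 unfolding d1 d2 by linarith
      qed
      obtain \<phi> where phi: "sum \<phi> Z = g None" "\<forall>C\<subseteq>Z. l C \<le> sum \<phi> C \<and> sum \<phi> C \<le> u C"
        using core[OF finZ u0 l0 usub lsup ucross lZ uZ] by blast
      define f where "f x = (if x \<in> X' then g (Some x) else if x \<in> X then \<phi> x else 0)" for x
      have "f \<in> EDF X S"
        unfolding EDF_def
      proof (intro CollectI conjI allI impI)
        fix x assume "x \<notin> X" then show "f x = 0" using assms(2) f_def by auto
      next
        fix A assume A: "A \<subseteq> X"
        define A1 where "A1 = A \<inter> X'"
        define C where "C = A - X'"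
        have A1X: "A1 \<subseteq> X'" and CZ: "C \<subseteq> Z" using A A1_def C_def Z_def by auto
        have finA: "finite A" using A finX finite_subset by blast
        have "sum f A = sum f A1 + sum f C" using sum.Int_Diff[OF finA, of f X'] A1_def C_def by simp
        also have "sum f A1 = gA A1" unfolding gA_def using A1X by (intro sum.cong) (auto simp: f_def)
        also have "sum f C = sum \<phi> C" using CZ by (intro sum.cong) (auto simp: f_def Z_def)
        finally have sA: "sum f A = gA A1 + sum \<phi> C" .
        have AU: "A1 \<union> C = A" using A1_def C_def by auto
        have "sum \<phi> C \<le> S A - gA A1" using phi(2) CZ u_le[OF A1X, of C] AU by force
        moreover have "- S A - gA A1 \<le> sum \<phi> C" using phi(2) CZ l_ge[OF A1X, of C] AU by force
        ultimately show "\<bar>sum f A\<bar> \<le> S A" using sA by linarith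
      qed
      moreover have "g = merge_M X X' f"
      proof
        fix v show "g v = merge_M X X' f v"
        proof (cases v)
          case None
          have "sum f (X - X') = sum \<phi> Z" unfolding Z_def by (intro sum.cong) (auto simp: f_def)
          then show ?thesis using None phi(1) by (simp add: merge_M_def)
        next
          case (Some x)
          show ?thesis
          proof (cases "x \<in> X'")
            case True then show ?thesis using Some by (simp add: merge_M_def f_def)
          next
            case False
            then have "v \<notin> merge_Y X'" using Some unfolding merge_Y_def by auto
            then show ?thesis using g0 Some False by (simp add: merge_M_def)
          qed
        qed
      qed
      ultimately show "g \<in> merge_M X X' ` EDF X S" by blast
    qed
  qed
qed

end
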